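(* Let $\Delta$ be a group acting (without inversions) $k$-acylindrically, cocompactly and minimally on a tree $X$. Let $H$ be a finitely generated subgroup of $\Delta$, and suppose that $M<H$ is a non-trivial subgroup that is normal in $\Delta$. Then the action of $H$ on $X$ is cocompact.
   Context: An action on a tree is $k$-acylindrical if the stabilizer of every geodesic edge-path of length greater than $k$ is trivial. An action on a tree is minimal if there is no proper invariant subtree, and cocompact if the quotient graph is finite. *)

theory Defs
  imports "HOL-Algebra.Group_Action" "HOL-Algebra.Generated_Groups"
begin

definition walk :: "('v \<Rightarrow> 'v \<Rightarrow> bool) \<Rightarrow> 'v list \<Rightarrow> bool" where
  "walk adj xs \<longleftrightarrow> xs \<noteq> [] \<and> (\<forall>i. Suc i < length xs \<longrightarrow> adj (xs ! i) (xs ! Suc i))"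

definition reduced_walk :: "('v \<Rightarrow> 'v \<Rightarrow> bool) \<Rightarrow> 'v list \<Rightarrow> bool" where
  "reduced_walk adj xs \<longleftrightarrow> walk adj xs \<and> (\<forall>i. i + 2 < length xs \<longrightarrow> xs ! i \<noteq> xs ! (i + 2))"

text \<open>Geodesic edge path: a walk of minimal length among walks with the same endpoints.
Its length (number of edges) is length xs - 1.\<close>
definition geodesic :: "('v \<Rightarrow> 'v \<Rightarrow> bool) \<Rightarrow> 'v list \<Rightarrow> bool" where
  "geodesic adj xs \<longleftrightarrow> walk adj xs \<and>
     (\<forall>ys. walk adj ys \<and> hd ys = hd xs \<and> last ys = last xs \<longrightarrow> length xs \<le> length ys)"

definition connected_in :: "'v set \<Rightarrow> ('v \<Rightarrow> 'v \<Rightarrow> bool) \<Rightarrow> bool" where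
  "connected_in S adj \<longleftrightarrow> (\<forall>x\<in>S. \<forall>y\<in>S. \<exists>xs. walk adj xs \<and> set xs \<subseteq> S \<and> hd xs = x \<and> last xs = y)"

text \<open>A tree: nonempty connected graph without circuits (no reduced closed walk
with at least one edge).\<close>
definition is_tree :: "'v set \<Rightarrow> ('v \<Rightarrow> 'v \<Rightarrow> bool) \<Rightarrow> bool" where
  "is_tree V adj \<longleftrightarrow> V \<noteq> {} \<and>
     (\<forall>x y. adj x y \<longrightarrow> x \<in> V \<and> y \<in> V \<and> adj y x \<and> x \<noteq> y) \<and>
     connected_in V adj \<and>
     \<not> (\<exists>xs. reduced_walk adj xs \<and> length xs \<ge> 2 \<and> hd xs = last xs)"

definition tree_action :: "('g, 'b) monoid_scheme \<Rightarrow> 'v set \<Rightarrow> ('v \<Rightarrow> 'v \<Rightarrow> bool) \<Rightarrow> ('g \<Rightarrow> 'v \<Rightarrow> 'v) \<Rightarrow> bool" where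
  "tree_action G V adj \<phi> \<longleftrightarrow> is_tree V adj \<and> group_action G V \<phi> \<and>
     (\<forall>g\<in>carrier G. \<forall>x\<in>V. \<forall>y\<in>V. adj x y \<longleftrightarrow> adj (\<phi> g x) (\<phi> g y))"

definition without_inversions :: "('g, 'b) monoid_scheme \<Rightarrow> ('v \<Rightarrow> 'v \<Rightarrow> bool) \<Rightarrow> ('g \<Rightarrow> 'v \<Rightarrow> 'v) \<Rightarrow> bool" where
  "without_inversions G adj \<phi> \<longleftrightarrow>
     \<not> (\<exists>g\<in>carrier G. \<exists>x y. adj x y \<and> \<phi> g x = y \<and> \<phi> g y = x)"

definition acylindrical :: "nat \<Rightarrow> ('g, 'b) monoid_scheme \<Rightarrow> ('v \<Rightarrow> 'v \<Rightarrow> bool) \<Rightarrow> ('g \<Rightarrow> 'v \<Rightarrow> 'v) \<Rightarrow> bool" where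
  "acylindrical k G adj \<phi> \<longleftrightarrow>
     (\<forall>xs. geodesic adj xs \<and> length xs - 1 > k \<longrightarrow>
        {g \<in> carrier G. \<forall>v\<in>set xs. \<phi> g v = v} = {\<one>\<^bsub>G\<^esub>})"

definition minimal_action :: "('g, 'b) monoid_scheme \<Rightarrow> 'v set \<Rightarrow> ('v \<Rightarrow> 'v \<Rightarrow> bool) \<Rightarrow> ('g \<Rightarrow> 'v \<Rightarrow> 'v) \<Rightarrow> bool" where
  "minimal_action G V adj \<phi> \<longleftrightarrow>
     (\<forall>S. S \<subseteq> V \<and> S \<noteq> {} \<and> connected_in S adj \<and> (\<forall>g\<in>carrier G. \<phi> g ` S \<subseteq> S) \<longrightarrow> S = V)"

text \<open>Cocompact action of the subset H of group elements: the quotient graph is finite,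
i.e. finitely many H-orbits of vertices and of (unoriented) edges.\<close>
definition cocompact_on :: "'g set \<Rightarrow> 'v set \<Rightarrow> ('v \<Rightarrow> 'v \<Rightarrow> bool) \<Rightarrow> ('g \<Rightarrow> 'v \<Rightarrow> 'v) \<Rightarrow> bool" where
  "cocompact_on H V adj \<phi> \<longleftrightarrow>
     finite {{\<phi> h x | h. h \<in> H} | x. x \<in> V} \<and>
     finite {{{\<phi> h x, \<phi> h y} | h. h \<in> H} | x y. adj x y}"

definition finitely_generated_subgroup :: "('g, 'b) monoid_scheme \<Rightarrow> 'g set \<Rightarrow> bool" where
  "finitely_generated_subgroup G H \<longleftrightarrow> subgroup H G \<and> (\<exists>S. finite S \<and> S \<subseteq> H \<and> generate G S = H)"

end

theory Submission
  imports Defs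
begin
fun wk :: "('v \<Rightarrow> 'v \<Rightarrow> bool) \<Rightarrow> 'v list \<Rightarrow> bool" where
  "wk R [] = False" | "wk R [x] = True" | "wk R (x # y # xs) = (R x y \<and> wk R (y # xs))"

fun rd :: "'v list \<Rightarrow> bool" where
  "rd (x # y # z # xs) = (x \<noteq> z \<and> rd (y # z # xs))" | "rd _ = True"

lemma walk_wk: "walk R xs = wk R xs"
proof (induction R xs rule: wk.induct)
  case (3 R x y xs)
  have "walk R (x # y # xs) = (R x y \<and> walk R (y # xs))"
    unfolding walk_def
  proof safe
    fix i assume h: "\<forall>i. Suc i < length (x # y # xs) \<longrightarrow> R ((x # y # xs) ! i) ((x # y # xs) ! Suc i)"
      "Suc i < length (y # xs)"
    then show "R ((y # xs) ! i) ((y # xs) ! Suc i)" using h(1)[rule_format, of "Suc i"] by simp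
  next
    assume "\<forall>i. Suc i < length (x # y # xs) \<longrightarrow> R ((x # y # xs) ! i) ((x # y # xs) ! Suc i)"
    then show "R x y" by (metis Suc_less_eq length_Cons nth_Cons_0 nth_Cons_Suc zero_less_Suc)
  next
    fix i assume "R x y" "\<forall>i. Suc i < length (y # xs) \<longrightarrow> R ((y # xs) ! i) ((y # xs) ! Suc i)"
      "Suc i < length (x # y # xs)"
    then show "R ((x # y # xs) ! i) ((x # y # xs) ! Suc i)"
      by (cases i) auto
  qed
  then show ?case using 3 by simp
qed (auto simp: walk_def)

lemma all_nat_split: "(\<forall>i::nat. Q i) \<longleftrightarrow> Q 0 \<and> (\<forall>i. Q (Suc i))"
  by (metis not0_implies_Suc)

lemma rd_nth: "rd xs = (\<forall>i. i + 2 < length xs \<longrightarrow> xs ! i \<noteq> xs ! (i + 2))"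
proof (induction xs rule: rd.induct)
  case (1 x y z xs)
  show ?case
    apply (subst all_nat_split)
    using 1 by (simp add: numeral_2_eq_2)
qed (auto simp: numeral_2_eq_2)

lemma reduced_wk: "reduced_walk R xs = (wk R xs \<and> rd xs)"
  unfolding reduced_walk_def walk_wk rd_nth by simp

lemma wk_append: "wk R (xs @ [p]) \<Longrightarrow> wk R (p # ys) \<Longrightarrow> wk R (xs @ p # ys)"
proof (induction xs)
  case (Cons a xs) then show ?case by (cases xs) auto
qed simp

lemma rd_tl: "rd (x # xs) \<Longrightarrow> rd xs"
  by (cases xs rule: rd.cases) auto

lemma wk_tl: "wk R (x # xs) \<Longrightarrow> xs \<noteq> [] \<Longrightarrow> wk R xs"
  by (cases xs) auto

lemma rd_append: "rd (xs @ [p]) \<Longrightarrow> rd (p # ys) \<Longrightarrow> (xs \<noteq> [] \<Longrightarrow> ys \<noteq> [] \<Longrightarrow> last xs \<noteq> hd ys) \<Longrightarrow> rd (xs @ p # ys)"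
proof (induction xs)
  case Nil then show ?case by simp
next
  case (Cons a xs)
  show ?case
  proof (cases xs)
    case Nil
    then show ?thesis using Cons.prems by (cases ys) auto
  next
    case (Cons b xs')
    have ih: "rd (xs @ p # ys)"
      apply (rule Cons.IH)
      using Cons.prems rd_tl \<open>xs = b # xs'\<close> by auto
    show ?thesis
      using Cons.prems(1) ih \<open>xs = b # xs'\<close> by (cases xs') auto
  qed
qed

lemma rd_prefix: "rd (xs @ ys) \<Longrightarrow> rd xs"
  unfolding rd_nth
proof (intro allI impI)
  fix i assume h: "\<forall>i. i + 2 < length (xs @ ys) \<longrightarrow> (xs @ ys) ! i \<noteq> (xs @ ys) ! (i + 2)" "i + 2 < length xs"
  then show "xs ! i \<noteq> xs ! (i + 2)" using h(1)[rule_format, of i] by (simp add: nth_append)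
qed

lemma wk_prefix: "wk R (xs @ ys) \<Longrightarrow> xs \<noteq> [] \<Longrightarrow> wk R xs"
proof (induction xs)
  case (Cons a xs) then show ?case by (cases xs) auto
qed simp

lemma rd_rev: "rd xs \<Longrightarrow> rd (rev xs)"
  unfolding rd_nth
proof (intro allI impI)
  fix i assume h: "\<forall>i. i + 2 < length xs \<longrightarrow> xs ! i \<noteq> xs ! (i + 2)" "i + 2 < length (rev xs)"
  define j where "j = length xs - 3 - i"
  have "rev xs ! i = xs ! (j + 2)" "rev xs ! (i+2) = xs ! j"
    using h(2) by (auto simp: rev_nth j_def intro!: arg_cong[where f = "(!) xs"])
  moreover have "j + 2 < length xs" using h(2) unfolding j_def by simp
  ultimately show "rev xs ! i \<noteq> rev xs ! (i + 2)" using h(1)[rule_format, of j] by auto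
qed

lemma wk_rev: "(\<And>x y. R x y \<Longrightarrow> R y x) \<Longrightarrow> wk R xs \<Longrightarrow> wk R (rev xs)"
proof (induction xs)
  case (Cons a xs)
  show ?case
  proof (cases xs)
    case Nil then show ?thesis by simp
  next
    case (Cons b xs')
    have "wk R (rev xs)" using Cons.IH Cons.prems \<open>xs = b # xs'\<close> by auto
    moreover have "wk R [b, a]" using Cons.prems \<open>xs = b # xs'\<close> by auto
    ultimately have "wk R (rev xs' @ b # [a])" using wk_append[of R "rev xs'" b "[a]"] \<open>xs = b # xs'\<close> by simp
    then show ?thesis using \<open>xs = b # xs'\<close> by simp
  qed
qed simp

lemma rd_map: "inj_on f (set xs) \<Longrightarrow> rd xs \<Longrightarrow> rd (map f xs)"
  by (induction xs rule: rd.induct) (auto simp: inj_on_def)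

lemma wk_map: "wk R xs \<Longrightarrow> (\<And>x y. x \<in> set xs \<Longrightarrow> y \<in> set xs \<Longrightarrow> R x y \<Longrightarrow> R (f x) (f y)) \<Longrightarrow> wk R (map f xs)"
  by (induction R xs rule: wk.induct) auto

lemma reduce: "wk R xs \<Longrightarrow> \<exists>ys. wk R ys \<and> rd ys \<and> hd ys = hd xs \<and> last ys = last xs \<and> set ys \<subseteq> set xs \<and> length ys \<le> length xs"
proof (induction xs)
  case Nil then show ?case by simp
next
  case (Cons x xs)
  show ?case
  proof (cases xs)
    case Nil then show ?thesis by (intro exI[of _ "[x]"]) simp
  next
    case (Cons y xs')
    then have "wk R xs" "R x y" using Cons.prems by auto
    then obtain ys where ys: "wk R ys" "rd ys" "hd ys = hd xs" "last ys = last xs" "set ys \<subseteq> set xs" "length ys \<le> length xs"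
      using Cons.IH by blast
    show ?thesis
    proof (cases ys)
      case Nil then show ?thesis using ys by simp
    next
      case (Cons y' ys')
      have yy: "y' = y" using ys \<open>ys = y' # ys'\<close> \<open>xs = y # xs'\<close> by simp
      show ?thesis
      proof (cases ys')
        case Nil
        then show ?thesis using ys yy \<open>ys = y' # ys'\<close> \<open>xs = y # xs'\<close> \<open>R x y\<close>
          by (intro exI[of _ "[x, y]"]) auto
      next
        case (Cons z r)
        show ?thesis
        proof (cases "x = z")
          case True
          then show ?thesis using ys yy \<open>ys = y' # ys'\<close> \<open>xs = y # xs'\<close> \<open>ys' = z # r\<close>
            by (intro exI[of _ "z # r"]) (auto dest: rd_tl)
        next
          case False
          then show ?thesis using ys yy \<open>ys = y' # ys'\<close> \<open>xs = y # xs'\<close> \<open>ys' = z # r\<close> \<open>R x y\<close>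
            by (intro exI[of _ "x # ys"]) auto
        qed
      qed
    qed
  qed
qed

locale tree =
  fixes V :: "'v set" and adj :: "'v \<Rightarrow> 'v \<Rightarrow> bool"
  assumes tr: "is_tree V adj"
begin

lemma adj_sym: "adj x y \<Longrightarrow> adj y x" using tr unfolding is_tree_def by blast
lemma adj_V: "adj x y \<Longrightarrow> x \<in> V" "adj x y \<Longrightarrow> y \<in> V" using tr unfolding is_tree_def by blast+
lemma adj_irr: "adj x y \<Longrightarrow> x \<noteq> y" using tr unfolding is_tree_def by blast
lemma V_ne: "V \<noteq> {}" using tr unfolding is_tree_def by blast

lemma no_circ: "wk adj xs \<Longrightarrow> rd xs \<Longrightarrow> length xs \<ge> 2 \<Longrightarrow> hd xs = last xs \<Longrightarrow> False"
  using tr unfolding is_tree_def reduced_wk by blast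

lemma conn: "x \<in> V \<Longrightarrow> y \<in> V \<Longrightarrow> \<exists>xs. wk adj xs \<and> rd xs \<and> hd xs = x \<and> last xs = y"
proof -
  assume "x \<in> V" "y \<in> V"
  then obtain xs where "walk adj xs" "hd xs = x" "last xs = y"
    using tr unfolding is_tree_def connected_in_def by blast
  then show ?thesis using reduce[of adj xs] by (auto simp: walk_wk)
qed

lemma wk_V: "wk adj xs \<Longrightarrow> hd xs \<in> V \<Longrightarrow> set xs \<subseteq> V"
proof (induction xs)
  case (Cons a xs) then show ?case by (cases xs) (auto dest: adj_V)
qed simp

lemma unique: "wk adj xs \<Longrightarrow> rd xs \<Longrightarrow> wk adj ys \<Longrightarrow> rd ys \<Longrightarrow> hd xs = hd ys \<Longrightarrow> last xs = last ys \<Longrightarrow> xs = ys"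
proof (induction xs arbitrary: ys)
  case Nil then show ?case by simp
next
  case (Cons a xs')
  obtain b ys' where ys: "ys = b # ys'" using Cons.prems by (cases ys) auto
  have ab: "a = b" using Cons.prems ys by simp
  show ?case
  proof (cases "xs' = []")
    case True
    show ?thesis
    proof (cases "ys' = []")
      case True then show ?thesis using \<open>xs' = []\<close> ab ys by simp
    next
      case False
      then have "length ys \<ge> 2" using ys by (cases ys') auto
      moreover have "hd ys = last ys" using Cons.prems(5,6) \<open>xs' = []\<close> ys by simp
      ultimately have False using no_circ[of ys] Cons.prems(3,4) by blast
      then show ?thesis ..
    qed
  next
    case False
    show ?thesis
    proof (cases "ys' = []")
      case True
      have "length (a # xs') \<ge> 2" using False by (cases xs') auto
      moreover have "hd (a # xs') = last (a # xs')" using Cons.prems(5,6) ys True by simp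
      ultimately have False using no_circ[of "a # xs'"] Cons.prems(1,2) by blast
      then show ?thesis ..
    next
      case ys'ne: False
      show ?thesis
      proof (cases "hd xs' = hd ys'")
        case True
        have "xs' = ys'"
        proof (rule Cons.IH)
          show "wk adj xs'" by (rule wk_tl[OF Cons.prems(1) False])
          show "rd xs'" by (rule rd_tl[OF Cons.prems(2)])
          show "wk adj ys'" using wk_tl[OF _ ys'ne] Cons.prems(3) ys by simp
          show "rd ys'" using rd_tl Cons.prems(4) ys by simp
          show "hd xs' = hd ys'" by fact
          show "last xs' = last ys'" using Cons.prems(6) ys False ys'ne by simp
        qed
        then show ?thesis using ab ys by simp
      next
        case hne: False
        let ?c = "rev xs' @ a # ys'"
        have "wk adj (rev xs' @ [a])" using wk_rev[OF _ Cons.prems(1)] adj_sym by auto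
        moreover have "wk adj (a # ys')" using Cons.prems(3) ys ab by simp
        ultimately have w: "wk adj ?c" by (rule wk_append)
        have r1: "rd (rev xs' @ [a])" using rd_rev[OF Cons.prems(2)] by simp
        have r2: "rd (a # ys')" using Cons.prems(4) ys ab by simp
        have r3: "rev xs' \<noteq> [] \<Longrightarrow> ys' \<noteq> [] \<Longrightarrow> last (rev xs') \<noteq> hd ys'" using hne False by (simp add: last_rev)
        have r: "rd ?c" by (rule rd_append[OF r1 r2 r3])
        have hl: "hd ?c = last ?c" using Cons.prems(6) ys False ys'ne by (simp add: hd_rev)
        have len: "length ?c \<ge> 2" using False by (cases xs') auto
        have False by (rule no_circ[OF w r len hl])
        then show ?thesis ..
      qed
    qed
  qed
qed

definition gp :: "'v \<Rightarrow> 'v \<Rightarrow> 'v list" where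
  "gp x y = (THE xs. wk adj xs \<and> rd xs \<and> hd xs = x \<and> last xs = y)"

definition d :: "'v \<Rightarrow> 'v \<Rightarrow> nat" where "d x y = length (gp x y) - 1"

lemma gp_eq: "wk adj xs \<Longrightarrow> rd xs \<Longrightarrow> hd xs = x \<Longrightarrow> last xs = y \<Longrightarrow> gp x y = xs"
  unfolding gp_def by (rule the_equality) (auto intro: unique)

lemma gp: assumes "x \<in> V" "y \<in> V"
  shows "wk adj (gp x y)" "rd (gp x y)" "hd (gp x y) = x" "last (gp x y) = y"
proof -
  obtain xs where "wk adj xs \<and> rd xs \<and> hd xs = x \<and> last xs = y" using conn assms by blast
  then have "gp x y = xs" using gp_eq by blast
  then show "wk adj (gp x y)" "rd (gp x y)" "hd (gp x y) = x" "last (gp x y) = y"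
    using \<open>wk adj xs \<and> rd xs \<and> hd xs = x \<and> last xs = y\<close> by auto
qed

lemma gp_ne: "x \<in> V \<Longrightarrow> y \<in> V \<Longrightarrow> gp x y \<noteq> []"
proof
  assume "x \<in> V" "y \<in> V" "gp x y = []"
  then show False using gp(1)[of x y] by simp
qed

lemma gp_V: "x \<in> V \<Longrightarrow> y \<in> V \<Longrightarrow> set (gp x y) \<subseteq> V"
proof -
  assume a: "x \<in> V" "y \<in> V"
  show ?thesis by (rule wk_V) (use gp[OF a] a in simp_all)
qed

lemma gp_refl: "gp x x = [x]" by (rule gp_eq) auto

lemma gp_sym: "x \<in> V \<Longrightarrow> y \<in> V \<Longrightarrow> gp y x = rev (gp x y)"
  by (rule gp_eq) (auto simp: gp hd_rev last_rev intro: wk_rev rd_rev adj_sym)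

lemma gp_adj: "adj x y \<Longrightarrow> gp x y = [x, y]" by (rule gp_eq) auto

lemma walk_len: "wk adj ws \<Longrightarrow> hd ws = x \<Longrightarrow> last ws = y \<Longrightarrow> d x y + 1 \<le> length ws"
proof -
  assume a: "wk adj ws" "hd ws = x" "last ws = y"
  then obtain ys where "wk adj ys \<and> rd ys \<and> hd ys = x \<and> last ys = y \<and> length ys \<le> length ws"
    using reduce[OF a(1)] by blast
  then have "gp x y = ys" "length ys \<le> length ws" "ys \<noteq> []" using gp_eq by auto
  then show ?thesis unfolding d_def by simp
qed

lemma d_sym: "x \<in> V \<Longrightarrow> y \<in> V \<Longrightarrow> d y x = d x y" unfolding d_def using gp_sym[of x y] by simp
lemma d_refl: "d x x = 0" unfolding d_def gp_refl by simp
lemma d_zero: assumes "x \<in> V" "y \<in> V" "d x y = 0" shows "x = y"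
proof -
  have "length (gp x y) = 1" using assms(3) gp_ne[OF assms(1,2)] unfolding d_def
    by (cases "gp x y") simp_all
  then obtain z where "gp x y = [z]" by (auto simp: length_Suc_conv)
  then show ?thesis using gp(3,4)[OF assms(1,2)] by simp
qed

lemma d_tri: assumes "x \<in> V" "y \<in> V" "z \<in> V" shows "d x z \<le> d x y + d y z"
proof -
  obtain as where as: "gp x y = as @ [y]" using gp(4)[OF assms(1,2)] gp_ne[OF assms(1,2)]
    by (metis append_butlast_last_id)
  obtain bs where bs: "gp y z = y # bs" using gp(3)[OF assms(2,3)] gp_ne[OF assms(2,3)]
    by (metis list.collapse)
  have "wk adj (as @ y # bs)" using gp(1)[OF assms(1,2)] gp(1)[OF assms(2,3)] unfolding as bs by (rule wk_append)
  moreover have "hd (as @ y # bs) = x" using gp(3)[OF assms(1,2)] as by (cases as) auto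
  moreover have "last (as @ y # bs) = z" using gp(4)[OF assms(2,3)] bs by (cases bs) auto
  ultimately have "d x z + 1 \<le> length (as @ y # bs)" by (rule walk_len)
  then show ?thesis unfolding d_def as bs by simp
qed

end

context tree begin

lemma adj_step: assumes "adj a b" "w \<in> V"
  shows "(gp a w = a # gp b w \<and> d a w = Suc (d b w)) \<or> (gp b w = b # gp a w \<and> d b w = Suc (d a w))"
proof -
  have aV: "a \<in> V" and bV: "b \<in> V" using assms adj_V by auto
  obtain ys' where ys: "gp b w = b # ys'" using gp(3)[OF bV assms(2)] gp_ne[OF bV assms(2)]
    by (metis list.collapse)
  show ?thesis
  proof (cases "ys' \<noteq> [] \<and> hd ys' = a")
    case True
    then obtain r where r: "ys' = a # r" by (cases ys') auto
    have "gp a w = a # r"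
    proof (rule gp_eq)
      show "wk adj (a # r)" using gp(1)[OF bV assms(2)] unfolding ys r by simp
      show "rd (a # r)" using gp(2)[OF bV assms(2)] unfolding ys r by (rule rd_tl)
      show "last (a # r) = w" using gp(4)[OF bV assms(2)] unfolding ys r by simp
    qed simp
    then have g: "gp b w = b # gp a w" using ys r by simp
    then have "d b w = Suc (d a w)" unfolding d_def using \<open>gp a w = a # r\<close> by simp
    then show ?thesis using g by simp
  next
    case False
    have g: "gp a w = a # gp b w"
    proof (rule gp_eq)
      show "wk adj (a # gp b w)" using gp(1)[OF bV assms(2)] assms(1) unfolding ys by simp
      show "rd (a # gp b w)" using gp(2)[OF bV assms(2)] False unfolding ys by (cases ys') auto
      show "last (a # gp b w) = w" using gp(4)[OF bV assms(2)] unfolding ys by simp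
    qed simp
    then have "d a w = Suc (d b w)" unfolding d_def using ys by simp
    then show ?thesis using g by simp
  qed
qed

lemma up: "wk adj (a # b # rest) \<Longrightarrow> rd (a # b # rest) \<Longrightarrow> w \<in> V \<Longrightarrow> d b w = Suc (d a w)
   \<Longrightarrow> \<forall>i < length (a # b # rest). d ((a # b # rest) ! i) w = d a w + i"
proof (induction rest arbitrary: a b)
  case Nil
  show ?case
  proof (intro allI impI)
    fix i assume "i < length [a, b]"
    then show "d ([a, b] ! i) w = d a w + i" using Nil.prems(4) by (cases i) auto
  qed
next
  case (Cons c rest)
  have ab: "adj a b" and bc: "adj b c" using Cons.prems(1) by auto
  have aV: "a \<in> V" and cV: "c \<in> V" using ab bc adj_V by auto
  have gb: "gp b w = b # gp a w" using adj_step[OF ab Cons.prems(3)] Cons.prems(4) by auto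
  have dc: "d c w = Suc (d b w)"
  proof -
    { assume "gp b w = b # gp c w"
      then have "gp c w = gp a w" using gb by simp
      then have "c = a" using gp(3)[OF aV Cons.prems(3)] gp(3)[OF cV Cons.prems(3)] by simp
      then have False using Cons.prems(2) by simp }
    then show ?thesis using adj_step[OF bc Cons.prems(3)] by auto
  qed
  have ih: "\<forall>i<length (b # c # rest). d ((b # c # rest) ! i) w = d b w + i"
    using Cons.IH[of b c] Cons.prems dc by (auto dest: rd_tl)
  show ?case
  proof (intro allI impI)
    fix i assume "i < length (a # b # c # rest)"
    then show "d ((a # b # c # rest) ! i) w = d a w + i"
      using ih Cons.prems(4) by (cases i) auto
  qed
qed

lemma vshape: "wk adj vs \<Longrightarrow> rd vs \<Longrightarrow> w \<in> V \<Longrightarrow> hd vs \<in> V \<Longrightarrow> i < length vs \<Longrightarrow>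
   d (vs ! i) w + i = d (hd vs) w \<or> d (last vs) w = d (vs ! i) w + (length vs - 1 - i)"
proof (induction vs arbitrary: i)
  case Nil then show ?case by simp
next
  case (Cons a vs')
  show ?case
  proof (cases vs')
    case Nil then show ?thesis using Cons.prems by simp
  next
    case (Cons b r)
    have ab: "adj a b" using Cons.prems(1) \<open>vs' = b # r\<close> by simp
    have bV: "b \<in> V" using ab adj_V by auto
    show ?thesis
    proof (cases "d a w = Suc (d b w)")
      case True
      show ?thesis
      proof (cases i)
        case 0 then show ?thesis by simp
      next
        case (Suc j)
        have "d (vs' ! j) w + j = d (hd vs') w \<or> d (last vs') w = d (vs' ! j) w + (length vs' - 1 - j)"
        proof (rule Cons.IH)
          show "wk adj vs'" using Cons.prems(1) \<open>vs' = b # r\<close> by simp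
          show "rd vs'" using Cons.prems(2) by (rule rd_tl)
        qed (use Cons.prems bV \<open>vs' = b # r\<close> Suc in auto)
        then show ?thesis using True Suc \<open>vs' = b # r\<close> by auto
      qed
    next
      case False
      then have "d b w = Suc (d a w)" using adj_step[OF ab Cons.prems(3)] by auto
      then have all: "\<forall>i<length (a # b # r). d ((a # b # r) ! i) w = d a w + i"
        using up[of a b r w] Cons.prems \<open>vs' = b # r\<close> by simp
      have l: "last (a # vs') = (a # b # r) ! Suc (length r)" using \<open>vs' = b # r\<close> by (simp add: last_conv_nth)
      have "d ((a # b # r) ! Suc (length r)) w = d a w + Suc (length r)" using all[rule_format, of "Suc (length r)"] by simp
      then have "d (last (a # vs')) w = d a w + (length (a # vs') - 1)"
        using l \<open>vs' = b # r\<close> by simp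
      moreover have "d ((a # vs') ! i) w = d a w + i" using all \<open>vs' = b # r\<close> Cons.prems(5) by simp
      ultimately show ?thesis using Cons.prems(5) by simp
    qed
  qed
qed

lemma ball_cvx: assumes "x \<in> V" "y \<in> V" "w \<in> V" "d x w \<le> r" "d y w \<le> r" "v \<in> set (gp x y)"
  shows "d v w \<le> r"
proof -
  obtain i where i: "i < length (gp x y)" "v = gp x y ! i" using assms(6) by (metis in_set_conv_nth)
  have "d (gp x y ! i) w + i = d (hd (gp x y)) w \<or> d (last (gp x y)) w = d (gp x y ! i) w + (length (gp x y) - 1 - i)"
    by (rule vshape) (use gp[OF assms(1,2)] assms i in auto)
  then show ?thesis using gp(3,4)[OF assms(1,2)] assms(4,5) i(2) by auto
qed

definition aut :: "('v \<Rightarrow> 'v) \<Rightarrow> bool" where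
  "aut f \<longleftrightarrow> inj_on f V \<and> f ` V \<subseteq> V \<and> (\<forall>x\<in>V. \<forall>y\<in>V. adj x y \<longleftrightarrow> adj (f x) (f y))"

lemma aut_gp: assumes "aut f" "x \<in> V" "y \<in> V" shows "gp (f x) (f y) = map f (gp x y)"
proof (rule gp_eq)
  have sV: "set (gp x y) \<subseteq> V" using gp_V assms by blast
  show "wk adj (map f (gp x y))"
    by (rule wk_map[OF gp(1)[OF assms(2,3)]]) (use assms(1) sV in \<open>auto simp: aut_def\<close>)
  show "rd (map f (gp x y))"
    by (rule rd_map[OF _ gp(2)[OF assms(2,3)]]) (use assms(1) sV in \<open>auto simp: aut_def intro: inj_on_subset\<close>)
  show "hd (map f (gp x y)) = f x" using gp_ne[OF assms(2,3)] gp(3)[OF assms(2,3)] by (simp add: hd_map)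
  show "last (map f (gp x y)) = f y" using gp_ne[OF assms(2,3)] gp(4)[OF assms(2,3)] by (simp add: last_map)
qed

lemma aut_d: "aut f \<Longrightarrow> x \<in> V \<Longrightarrow> y \<in> V \<Longrightarrow> d (f x) (f y) = d x y"
  unfolding d_def using aut_gp by simp

definition cvx :: "'v set \<Rightarrow> bool" where
  "cvx S \<longleftrightarrow> S \<subseteq> V \<and> (\<forall>x\<in>S. \<forall>y\<in>S. set (gp x y) \<subseteq> S)"

lemma conn_cvx: assumes "connected_in S adj" "S \<subseteq> V" shows "cvx S"
  unfolding cvx_def
proof (intro conjI ballI assms(2))
  fix x y assume "x \<in> S" "y \<in> S"
  then obtain xs where xs: "walk adj xs" "set xs \<subseteq> S" "hd xs = x" "last xs = y"
    using assms(1) unfolding connected_in_def by blast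
  then obtain ys where ys: "wk adj ys \<and> rd ys \<and> hd ys = hd xs \<and> last ys = last xs \<and> set ys \<subseteq> set xs"
    using reduce[of adj xs] unfolding walk_wk by blast
  then have "gp x y = ys" using gp_eq xs by blast
  then show "set (gp x y) \<subseteq> S" using ys xs by blast
qed

lemma cvx_conn: assumes "cvx S" shows "connected_in S adj"
  unfolding connected_in_def
proof (intro ballI)
  fix x y assume "x \<in> S" "y \<in> S"
  then have "x \<in> V" "y \<in> V" using assms unfolding cvx_def by auto
  then show "\<exists>xs. walk adj xs \<and> set xs \<subseteq> S \<and> hd xs = x \<and> last xs = y"
    using gp[of x y] assms \<open>x \<in> S\<close> \<open>y \<in> S\<close> unfolding cvx_def walk_wk by (intro exI[of _ "gp x y"]) auto
qed

lemma proj_ex: "S \<noteq> {} \<Longrightarrow> \<exists>p\<in>S. \<forall>q\<in>S. d x p \<le> d x q"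
proof -
  assume "S \<noteq> {}"
  then obtain s where "s \<in> S" by blast
  then show ?thesis using ex_has_least_nat[of "\<lambda>p. p \<in> S" s "d x"] by blast
qed

lemma proj_path: assumes "cvx S" "p \<in> S" "\<forall>q\<in>S. d x p \<le> d x q" "x \<in> V" "x \<notin> S"
  shows "\<exists>as. gp x p = as @ [p] \<and> as \<noteq> [] \<and> last as \<notin> S \<and> last as \<in> V \<and> hd as = x"
proof -
  have pV: "p \<in> V" using assms unfolding cvx_def by auto
  define as where "as = butlast (gp x p)"
  have g: "gp x p = as @ [p]" unfolding as_def using gp_ne[OF assms(4) pV] gp(4)[OF assms(4) pV]
    by (metis append_butlast_last_id)
  have ne: "as \<noteq> []"
  proof
    assume "as = []"
    then have "x = p" using g gp(3)[OF assms(4) pV] by simp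
    then show False using assms by simp
  qed
  have hx: "hd as = x" using g ne gp(3)[OF assms(4) pV] by simp
  have "gp x (last as) = as"
  proof (rule gp_eq)
    show "wk adj as" using gp(1)[OF assms(4) pV] ne unfolding g by (rule wk_prefix)
    show "rd as" using gp(2)[OF assms(4) pV] unfolding g by (rule rd_prefix)
  qed (use hx in auto)
  then have lt: "d x (last as) < d x p" unfolding d_def g using ne by (cases as) auto
  have "last as \<in> set (gp x p)" using g ne by simp
  then have "last as \<in> V" using gp_V[OF assms(4) pV] by blast
  moreover have "last as \<notin> S" using lt assms(3) by force
  ultimately show ?thesis using g ne hx by blast
qed

end

context tree begin

lemma fix_cvx: assumes "aut f" shows "cvx {x \<in> V. f x = x}"
  unfolding cvx_def
proof (intro conjI ballI subsetI)
  fix x y v assume x: "x \<in> {x \<in> V. f x = x}" and y: "y \<in> {x \<in> V. f x = x}" and v: "v \<in> set (gp x y)"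
  have "map f (gp x y) = gp x y" using aut_gp[OF assms, of x y] x y by simp
  then have "f v = v" using v by (metis map_eq_conv map_ident)
  moreover have "v \<in> V" using gp_V[of x y] x y v by auto
  ultimately show "v \<in> {x \<in> V. f x = x}" by simp
qed auto

lemma aut_cvx: assumes "aut f" "cvx S" shows "cvx (f ` S)"
  unfolding cvx_def
proof (intro conjI ballI)
  show "f ` S \<subseteq> V" using assms unfolding aut_def cvx_def by blast
  fix x y assume "x \<in> f ` S" "y \<in> f ` S"
  then obtain a b where ab: "a \<in> S" "b \<in> S" "x = f a" "y = f b" by blast
  then have "a \<in> V" "b \<in> V" using assms(2) unfolding cvx_def by auto
  then have "gp x y = map f (gp a b)" using aut_gp[OF assms(1)] ab by simp
  then show "set (gp x y) \<subseteq> f ` S" using assms(2) ab unfolding cvx_def by fastforce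
qed

lemma d1_adj: assumes "x \<in> V" "y \<in> V" "d x y = 1" shows "adj x y"
proof -
  have "length (gp x y) = 2" using assms(3) gp_ne[OF assms(1,2)] unfolding d_def
    by (cases "gp x y") auto
  then obtain a b where "gp x y = [a, b]" by (auto simp: length_Suc_conv numeral_2_eq_2)
  then show ?thesis using gp[OF assms(1,2)] by simp
qed

lemma gp_geodesic: assumes "x \<in> V" "y \<in> V" shows "geodesic adj (gp x y)"
  unfolding geodesic_def
proof (intro conjI allI impI)
  show "walk adj (gp x y)" unfolding walk_wk using gp[OF assms] by simp
  fix ys assume "walk adj ys \<and> hd ys = hd (gp x y) \<and> last ys = last (gp x y)"
  then have "d x y + 1 \<le> length ys" using walk_len gp[OF assms] unfolding walk_wk by simp
  then show "length (gp x y) \<le> length ys" unfolding d_def using gp_ne[OF assms] by (cases "gp x y") auto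
qed

lemma half: assumes "aut b" "p \<in> {x \<in> V. b x = x}" "\<forall>q\<in>{x \<in> V. b x = x}. d x p \<le> d x q" "x \<in> V" "b x \<noteq> x"
  shows "\<exists>as. gp x (b x) = as @ p # map b (rev as)"
proof -
  let ?F = "{x \<in> V. b x = x}"
  obtain as where as: "gp x p = as @ [p]" "as \<noteq> []" "last as \<notin> ?F" "last as \<in> V" "hd as = x"
    using proj_path[OF fix_cvx[OF assms(1)] assms(2,3,4)] assms(5) by auto
  have pV: "p \<in> V" "b p = p" using assms(2) by auto
  have bxV: "b x \<in> V" using assms(1,4) unfolding aut_def by auto
  have "gp p (b x) = gp (b p) (b x)" using pV by simp
  also have "\<dots> = map b (gp p x)" using aut_gp[OF assms(1) pV(1) assms(4)] .
  also have "\<dots> = map b (rev (gp x p))" using gp_sym[OF assms(4) pV(1)] by simp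
  also have "\<dots> = p # map b (rev as)" using as(1) pV by simp
  finally have g2: "gp p (b x) = p # map b (rev as)" .
  have "gp x (b x) = as @ p # map b (rev as)"
  proof (rule gp_eq)
    show "wk adj (as @ p # map b (rev as))"
      using gp(1)[OF assms(4) pV(1)] gp(1)[OF pV(1) bxV] unfolding as(1) g2 by (rule wk_append)
    have j: "as \<noteq> [] \<Longrightarrow> map b (rev as) \<noteq> [] \<Longrightarrow> last as \<noteq> hd (map b (rev as))"
      using as(2,3,4) by (simp add: hd_map hd_rev)
    show "rd (as @ p # map b (rev as))"
      using gp(2)[OF assms(4) pV(1)] gp(2)[OF pV(1) bxV] j unfolding as(1) g2 by (rule rd_append)
    show "hd (as @ p # map b (rev as)) = x" using as by simp
    show "last (as @ p # map b (rev as)) = b x" using gp(4)[OF pV(1) bxV] unfolding g2 by simp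
  qed
  then show ?thesis by blast
qed

lemma serre: assumes "aut a" "aut b" "{x \<in> V. a x = x} \<noteq> {}" "{x \<in> V. b x = x} \<noteq> {}"
  "{x \<in> V. a x = x} \<inter> {x \<in> V. b x = x} = {}" "x \<in> V" "a (b x) = x"
  shows False
proof -
  let ?Fa = "{x \<in> V. a x = x}" and ?Fb = "{x \<in> V. b x = x}"
  define y where "y = b x"
  have yV: "y \<in> V" using assms(2,6) unfolding aut_def y_def by auto
  have ay: "a y = x" using assms(7) y_def by simp
  have xb: "b x \<noteq> x" using assms(5,6,7) by auto
  have ya: "a y \<noteq> y" using assms(5,6,7) y_def by auto
  obtain p where p: "p \<in> ?Fb" "\<forall>q\<in>?Fb. d x p \<le> d x q" using proj_ex[OF assms(4)] by blast
  obtain q where q: "q \<in> ?Fa" "\<forall>r\<in>?Fa. d y q \<le> d y r" using proj_ex[OF assms(3)] by blast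
  obtain as where as: "gp x y = as @ p # map b (rev as)" using half[OF assms(2) p assms(6) xb] y_def by auto
  obtain bs where bs: "gp y x = bs @ q # map a (rev bs)" using half[OF assms(1) q yV ya] ay by auto
  have "gp x y = rev (gp y x)" using gp_sym[OF yV assms(6)] .
  also have "\<dots> = map a bs @ q # rev bs" unfolding bs by (simp add: rev_map)
  finally have e: "as @ p # map b (rev as) = map a bs @ q # rev bs" using as by simp
  then have "length (as @ p # map b (rev as)) = length (map a bs @ q # rev bs)" by simp
  then have "length as = length bs" by simp
  then have "p = q" using e by simp
  then show False using p(1) q(1) assms(5) by blast
qed

lemma cvx_V: "cvx S \<Longrightarrow> S \<subseteq> V" unfolding cvx_def by blast
lemma cvx_gp: "cvx S \<Longrightarrow> x \<in> S \<Longrightarrow> y \<in> S \<Longrightarrow> set (gp x y) \<subseteq> S" unfolding cvx_def by blast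

lemma mindisp: assumes "aut f" "\<forall>x\<in>V. f' (f x) = x" "\<forall>x\<in>V. f x \<noteq> x" "x0 \<in> V"
  "\<forall>x\<in>V. d x0 (f x0) \<le> d x (f x)" "cvx S" "S \<noteq> {}" "f ` S \<subseteq> S" "f' ` S \<subseteq> S"
  shows "x0 \<in> S"
proof (rule ccontr)
  assume nx: "x0 \<notin> S"
  obtain p where p: "p \<in> S" "\<forall>q\<in>S. d x0 p \<le> d x0 q" using proj_ex[OF assms(7)] by blast
  obtain as where as: "gp x0 p = as @ [p]" "as \<noteq> []" "last as \<notin> S" "last as \<in> V" "hd as = x0"
    using proj_path[OF assms(6) p assms(4) nx] by blast
  have pV: "p \<in> V" using p cvx_V[OF assms(6)] by blast
  have fpS: "f p \<in> S" using p assms(8) by auto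
  have fpV: "f p \<in> V" using fpS cvx_V[OF assms(6)] by blast
  have fx0V: "f x0 \<in> V" using assms(1,4) unfolding aut_def by blast
  have fpp: "f p \<noteq> p" using assms(3) pV by auto
  have csS: "set (gp p (f p)) \<subseteq> S" using cvx_gp[OF assms(6) p(1) fpS] .
  obtain cs' where cs: "gp p (f p) = p # cs'" using gp(3)[OF pV fpV] gp_ne[OF pV fpV] by (metis list.collapse)
  have "cs' \<noteq> []" using gp(4)[OF pV fpV] fpp cs by auto
  define es where "es = butlast cs'"
  have "last cs' = f p" using gp(4)[OF pV fpV] cs \<open>cs' \<noteq> []\<close> by simp
  then have es: "cs' = es @ [f p]" unfolding es_def using append_butlast_last_id[OF \<open>cs' \<noteq> []\<close>] by simp
  have g3: "gp (f p) (f x0) = f p # map f (rev as)"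
  proof -
    have "gp (f p) (f x0) = map f (gp p x0)" by (rule aut_gp[OF assms(1) pV assms(4)])
    also have "\<dots> = map f (rev (gp x0 p))" using gp_sym[OF assms(4) pV] by simp
    finally show ?thesis using as(1) by simp
  qed
  have w1: "wk adj (as @ p # es @ [f p])"
    using gp(1)[OF assms(4) pV] gp(1)[OF pV fpV] unfolding as(1) cs es by (rule wk_append)
  have r1: "rd (as @ p # es @ [f p])"
  proof (rule rd_append)
    show "rd (as @ [p])" using gp(2)[OF assms(4) pV] unfolding as(1) .
    show "rd (p # es @ [f p])" using gp(2)[OF pV fpV] unfolding cs es .
    have "hd (es @ [f p]) \<in> S" using csS unfolding cs es by (cases es) auto
    then show "last as \<noteq> hd (es @ [f p])" using as(3) by auto
  qed
  have W: "gp x0 (f x0) = (as @ p # es) @ f p # map f (rev as)"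
  proof (rule gp_eq)
    show "wk adj ((as @ p # es) @ f p # map f (rev as))"
    proof (rule wk_append)
      show "wk adj ((as @ p # es) @ [f p])" using w1 by simp
      show "wk adj (f p # map f (rev as))" using gp(1)[OF fpV fx0V] unfolding g3 .
    qed
    show "rd ((as @ p # es) @ f p # map f (rev as))"
    proof (rule rd_append)
      show "rd ((as @ p # es) @ [f p])" using r1 by simp
      show "rd (f p # map f (rev as))" using gp(2)[OF fpV fx0V] unfolding g3 .
      have "last (as @ p # es) \<in> set (p # es)" by (cases es rule: rev_cases) auto
      then have l: "last (as @ p # es) \<in> S" using csS unfolding cs es by auto
      have "f (last as) \<notin> S"
      proof
        assume "f (last as) \<in> S"
        then have "f' (f (last as)) \<in> S" using assms(9) by auto
        then show False using assms(2) as(3,4) by auto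
      qed
      then have "hd (map f (rev as)) \<notin> S" using as(2) by (simp add: hd_map hd_rev)
      then show "last (as @ p # es) \<noteq> hd (map f (rev as))" using l by auto
    qed
    show "hd ((as @ p # es) @ f p # map f (rev as)) = x0" using as by simp
    show "last ((as @ p # es) @ f p # map f (rev as)) = f x0" using gp(4)[OF fpV fx0V] unfolding g3 by simp
  qed
  have "d x0 (f x0) = length as + length es + 1 + length as" unfolding d_def W by simp
  moreover have "d p (f p) = length es + 1" unfolding d_def cs es by simp
  moreover have "length as \<ge> 1" using as(2) by (cases as) auto
  ultimately have "d p (f p) < d x0 (f x0)" by linarith
  moreover have "d x0 (f x0) \<le> d p (f p)" using assms(5) pV by blast
  ultimately show False by linarith
qed

end

locale ctx = tree V adj for V :: "'v set" and adj :: "'v \<Rightarrow> 'v \<Rightarrow> bool" +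
  fixes G :: "('g, 'b) monoid_scheme" and \<phi> :: "'g \<Rightarrow> 'v \<Rightarrow> 'v" and k :: nat and H M :: "'g set"
  assumes grp: "group G" and ta: "tree_action G V adj \<phi>"
    and acy: "acylindrical k G adj \<phi>" and mini: "minimal_action G V adj \<phi>"
    and fg: "finitely_generated_subgroup G H" and MH: "M \<subseteq> H" and nM: "normal M G" and Mnt: "M \<noteq> {\<one>\<^bsub>G\<^esub>}"
begin

lemma ga: "group_action G V \<phi>" using ta unfolding tree_action_def by blast
lemma act_V: "g \<in> carrier G \<Longrightarrow> x \<in> V \<Longrightarrow> \<phi> g x \<in> V" using group_action.element_image[OF ga] by blast
lemma act_mult: "g \<in> carrier G \<Longrightarrow> h \<in> carrier G \<Longrightarrow> x \<in> V \<Longrightarrow> \<phi> (g \<otimes>\<^bsub>G\<^esub> h) x = \<phi> g (\<phi> h x)"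
  using group_action.composition_rule[OF ga] by blast
lemma act_one: "x \<in> V \<Longrightarrow> \<phi> \<one>\<^bsub>G\<^esub> x = x"
proof -
  assume "x \<in> V"
  then have "(\<lambda>x \<in> V. x) x = x" by simp
  then show ?thesis using group_action.id_eq_one[OF ga] by metis
qed
lemma act_inv1: assumes "g \<in> carrier G" "x \<in> V" shows "\<phi> (inv\<^bsub>G\<^esub> g) (\<phi> g x) = x"
proof -
  have ig: "inv\<^bsub>G\<^esub> g \<in> carrier G" using group.inv_closed[OF grp assms(1)] .
  have "\<phi> (inv\<^bsub>G\<^esub> g) (\<phi> g x) = \<phi> (inv\<^bsub>G\<^esub> g \<otimes>\<^bsub>G\<^esub> g) x" using act_mult[OF ig assms] by simp
  also have "\<dots> = \<phi> \<one>\<^bsub>G\<^esub> x" using group.l_inv[OF grp assms(1)] by simp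
  finally show ?thesis using act_one[OF assms(2)] by simp
qed
lemma act_inv2: assumes "g \<in> carrier G" "x \<in> V" shows "\<phi> g (\<phi> (inv\<^bsub>G\<^esub> g) x) = x"
proof -
  have ig: "inv\<^bsub>G\<^esub> g \<in> carrier G" using group.inv_closed[OF grp assms(1)] .
  have "\<phi> g (\<phi> (inv\<^bsub>G\<^esub> g) x) = \<phi> (g \<otimes>\<^bsub>G\<^esub> inv\<^bsub>G\<^esub> g) x" using act_mult[OF assms(1) ig assms(2)] by simp
  also have "\<dots> = \<phi> \<one>\<^bsub>G\<^esub> x" using group.r_inv[OF grp assms(1)] by simp
  finally show ?thesis using act_one[OF assms(2)] by simp
qed
lemma act_aut: assumes "g \<in> carrier G" shows "aut (\<phi> g)"
  unfolding aut_def
proof (intro conjI)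
  show "inj_on (\<phi> g) V" by (rule group_action.inj_prop[OF ga assms])
  show "\<phi> g ` V \<subseteq> V" using act_V[OF assms] by blast
  show "\<forall>x\<in>V. \<forall>y\<in>V. adj x y = adj (\<phi> g x) (\<phi> g y)" using ta assms unfolding tree_action_def by blast
qed
lemma act_d: "g \<in> carrier G \<Longrightarrow> x \<in> V \<Longrightarrow> y \<in> V \<Longrightarrow> d (\<phi> g x) (\<phi> g y) = d x y"
  by (rule aut_d[OF act_aut])

lemma subM: "subgroup M G" using normal_imp_subgroup[OF nM] .
lemma subH: "subgroup H G" using fg unfolding finitely_generated_subgroup_def by blast
lemma M_G: "m \<in> M \<Longrightarrow> m \<in> carrier G" using subgroup.subset[OF subM] by blast
lemma H_G: "h \<in> H \<Longrightarrow> h \<in> carrier G" using subgroup.subset[OF subH] by blast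

lemma conj_act: assumes "g \<in> carrier G" "m \<in> carrier G" "y \<in> V"
  shows "\<phi> (g \<otimes>\<^bsub>G\<^esub> m \<otimes>\<^bsub>G\<^esub> inv\<^bsub>G\<^esub> g) y = \<phi> g (\<phi> m (\<phi> (inv\<^bsub>G\<^esub> g) y))"
proof -
  have ig: "inv\<^bsub>G\<^esub> g \<in> carrier G" using group.inv_closed[OF grp assms(1)] .
  have gm: "g \<otimes>\<^bsub>G\<^esub> m \<in> carrier G" using monoid.m_closed[OF group.is_monoid[OF grp] assms(1,2)] .
  show ?thesis using act_mult[OF gm ig assms(3)] act_mult[OF assms(1,2) act_V[OF ig assms(3)]] by simp
qed

lemma mini_use: assumes "cvx S" "S \<noteq> {}" "\<And>g x. g \<in> carrier G \<Longrightarrow> x \<in> S \<Longrightarrow> \<phi> g x \<in> S"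
  shows "S = V"
proof -
  have "\<forall>g\<in>carrier G. \<phi> g ` S \<subseteq> S" using assms(3) by blast
  then show ?thesis using mini[unfolded minimal_action_def, rule_format, of S] cvx_conn[OF assms(1)] cvx_V[OF assms(1)] assms(2)
    by blast
qed

lemma bounded_finite: assumes pV: "p \<in> V" and B: "\<forall>x\<in>V. d x p \<le> B" shows "finite V"
proof -
  define Z where "Z r = {v \<in> V. \<forall>w\<in>V. d v w \<le> r}" for r
  have Zcvx: "cvx (Z r)" for r
    unfolding cvx_def
  proof (intro conjI ballI subsetI)
    fix x y v assume x: "x \<in> Z r" and y: "y \<in> Z r" and v: "v \<in> set (gp x y)"
    have xV: "x \<in> V" and yV: "y \<in> V" using x y unfolding Z_def by auto
    have vV: "v \<in> V" using gp_V[OF xV yV] v by blast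
    have "d v w \<le> r" if "w \<in> V" for w
      using ball_cvx[OF xV yV that _ _ v] x y that unfolding Z_def by auto
    then show "v \<in> Z r" using vV unfolding Z_def by auto
  qed (auto simp: Z_def)
  have Zinv: "\<phi> g v \<in> Z r" if "g \<in> carrier G" "v \<in> Z r" for g v r
  proof -
    have vV: "v \<in> V" using that unfolding Z_def by auto
    have ig: "inv\<^bsub>G\<^esub> g \<in> carrier G" using group.inv_closed[OF grp that(1)] .
    have "d (\<phi> g v) w \<le> r" if wV: "w \<in> V" for w
    proof -
      have "d (\<phi> g v) w = d (\<phi> g v) (\<phi> g (\<phi> (inv\<^bsub>G\<^esub> g) w))" using act_inv2[OF \<open>g \<in> carrier G\<close> wV] by simp
      also have "\<dots> = d v (\<phi> (inv\<^bsub>G\<^esub> g) w)" using act_d[OF \<open>g \<in> carrier G\<close> vV act_V[OF ig wV]] .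
      also have "\<dots> \<le> r" using \<open>v \<in> Z r\<close> act_V[OF ig wV] unfolding Z_def by auto
      finally show ?thesis .
    qed
    then show ?thesis using act_V[OF that(1) vV] unfolding Z_def by auto
  qed
  have "d p w \<le> 2 * B" if "w \<in> V" for w using B d_sym[OF pV that] that by force
  then have "p \<in> Z (2 * B)" unfolding Z_def using pV by blast
  then have ex: "Z (2 * B) \<noteq> {}" by blast
  define r0 where "r0 = (LEAST r. Z r \<noteq> {})"
  have Zr0: "Z r0 \<noteq> {}" unfolding r0_def by (rule LeastI[of "\<lambda>r. Z r \<noteq> {}", OF ex])
  have Zmin: "Z r = {}" if "r < r0" for r using not_less_Least[of r "\<lambda>r. Z r \<noteq> {}"] that unfolding r0_def by blast
  have ZV: "Z r0 = V" by (rule mini_use[OF Zcvx Zr0 Zinv])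
  show ?thesis
  proof (cases "r0 = 0")
    case True
    have "V \<subseteq> {p}"
    proof
      fix w assume "w \<in> V"
      then have "d p w = 0" using ZV pV True unfolding Z_def by auto
      then show "w \<in> {p}" using d_zero[OF pV \<open>w \<in> V\<close>] by simp
    qed
    then show ?thesis using finite_subset by blast
  next
    case False
    have "p \<notin> Z (r0 - 1)" using Zmin False by simp
    then obtain w where wV: "w \<in> V" and gt: "\<not> d p w \<le> r0 - 1" using pV unfolding Z_def by auto
    have "d p w \<le> r0" using ZV pV wV unfolding Z_def by auto
    then have dpw: "d p w = r0" using gt by simp
    show ?thesis
    proof (cases "r0 = 1")
      case True
      have "V \<subseteq> {p, w}"
      proof
        fix u assume uV: "u \<in> V"
        show "u \<in> {p, w}"
        proof (rule ccontr)
          assume "u \<notin> {p, w}"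
          then have up: "u \<noteq> p" and uw: "u \<noteq> w" by auto
          have "d u p \<le> 1" "d u w \<le> 1" using ZV uV pV wV True unfolding Z_def by auto
          moreover have "d u p \<noteq> 0" using d_zero[OF uV pV] up by blast
          moreover have "d u w \<noteq> 0" using d_zero[OF uV wV] uw by blast
          ultimately have "d u p = 1" "d u w = 1" by auto
          then have a1: "adj u p" and a3: "adj w u" using d1_adj[OF uV pV] d1_adj[OF uV wV] adj_sym by auto
          have a2: "adj p w" using d1_adj[OF pV wV] dpw True by simp
          have "wk adj [u, p, w, u]" using a1 a2 a3 by simp
          moreover have "rd [u, p, w, u]" using uw up by simp
          moreover have "length [u, p, w, u] \<ge> 2" by simp
          moreover have "hd [u, p, w, u] = last [u, p, w, u]" by simp
          ultimately show False by (rule no_circ)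
        qed
      qed
      then show ?thesis using finite_subset by blast
    next
      case False2: False
      let ?g = "gp p w"
      have len: "length ?g = r0 + 1" using dpw gp_ne[OF pV wV] unfolding d_def by (cases ?g) auto
      have i1: "1 < length ?g" using len False by simp
      define c where "c = ?g ! 1"
      have cV: "c \<in> V" using gp_V[OF pV wV] i1 unfolding c_def by auto
      have "c \<in> Z (r0 - 1)" unfolding Z_def
      proof (intro CollectI conjI ballI cV)
        fix u assume uV: "u \<in> V"
        have "d (?g ! 1) u + 1 = d (hd ?g) u \<or> d (last ?g) u = d (?g ! 1) u + (length ?g - 1 - 1)"
          by (rule vshape) (use gp[OF pV wV] pV uV i1 in auto)
        moreover have "d p u \<le> r0" "d w u \<le> r0" using ZV pV wV uV unfolding Z_def by auto
        ultimately have "d c u + 1 = d p u \<or> d w u = d c u + (r0 - 1)" "d p u \<le> r0" "d w u \<le> r0"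
          using gp(3,4)[OF pV wV] len unfolding c_def by simp_all
        moreover have "r0 \<ge> 2" using False2 False by simp
        ultimately show "d c u \<le> r0 - 1" by linarith
      qed
      moreover have "Z (r0 - 1) = {}" using Zmin False by simp
      ultimately show ?thesis by blast
    qed
  qed
qed

end

context ctx begin

lemma elliptic: assumes ell: "\<forall>m\<in>M. \<exists>x\<in>V. \<phi> m x = x" shows "finite V"
proof -
  have oneM: "\<one>\<^bsub>G\<^esub> \<in> M" using subgroup.one_closed[OF subM] .
  obtain m where m: "m \<in> M" "m \<noteq> \<one>\<^bsub>G\<^esub>" using Mnt oneM by blast
  have mG: "m \<in> carrier G" using M_G[OF m(1)] .
  let ?F = "{x \<in> V. \<phi> m x = x}"
  obtain p where pV: "p \<in> V" and pm: "\<phi> m p = p" using ell m(1) by blast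
  have Fcvx: "cvx ?F" using fix_cvx[OF act_aut[OF mG]] .
  have diam: "d x y \<le> k" if x: "x \<in> ?F" and y: "y \<in> ?F" for x y
  proof (rule ccontr)
    assume nk: "\<not> d x y \<le> k"
    have xV: "x \<in> V" and yV: "y \<in> V" using x y by auto
    have geo: "geodesic adj (gp x y)" using gp_geodesic[OF xV yV] .
    have "length (gp x y) - 1 > k" using nk unfolding d_def by simp
    then have stab: "{g \<in> carrier G. \<forall>v\<in>set (gp x y). \<phi> g v = v} = {\<one>\<^bsub>G\<^esub>}"
      using acy geo unfolding acylindrical_def by blast
    have "\<forall>v\<in>set (gp x y). \<phi> m v = v" using cvx_gp[OF Fcvx x y] by blast
    then have "m \<in> {g \<in> carrier G. \<forall>v\<in>set (gp x y). \<phi> g v = v}" using mG by blast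
    then show False using stab m(2) by blast
  qed
  have close: "d p (\<phi> g p) \<le> 2 * k" if gG: "g \<in> carrier G" for g
  proof -
    have ig: "inv\<^bsub>G\<^esub> g \<in> carrier G" using group.inv_closed[OF grp gG] .
    define m' where "m' = g \<otimes>\<^bsub>G\<^esub> m \<otimes>\<^bsub>G\<^esub> inv\<^bsub>G\<^esub> g"
    have m'M: "m' \<in> M" unfolding m'_def using normal.inv_op_closed2[OF nM gG m(1)] .
    have m'G: "m' \<in> carrier G" using M_G[OF m'M] .
    have cm: "\<phi> m' y = \<phi> g (\<phi> m (\<phi> (inv\<^bsub>G\<^esub> g) y))" if "y \<in> V" for y
      unfolding m'_def using conj_act[OF gG mG that] .
    let ?F' = "{x \<in> V. \<phi> m' x = x}"
    have gpF': "\<phi> g p \<in> ?F'" using cm[OF act_V[OF gG pV]] act_inv1[OF gG pV] pm act_V[OF gG pV] by simp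
    have "?F \<inter> ?F' \<noteq> {}"
    proof
      assume disj: "?F \<inter> ?F' = {}"
      have "m \<otimes>\<^bsub>G\<^esub> m' \<in> M" using subgroup.m_closed[OF subM m(1) m'M] .
      then obtain x where xV: "x \<in> V" and fx: "\<phi> (m \<otimes>\<^bsub>G\<^esub> m') x = x" using ell by blast
      have "\<phi> m (\<phi> m' x) = x" using fx act_mult[OF mG m'G xV] by simp
      moreover have "?F \<noteq> {}" using pV pm by blast
      moreover have "?F' \<noteq> {}" using gpF' by blast
      ultimately show False using serre[OF act_aut[OF mG] act_aut[OF m'G] _ _ disj xV] by blast
    qed
    then obtain z where zF: "z \<in> ?F" and zF': "z \<in> ?F'" by blast
    have zV: "z \<in> V" using zF by simp
    define z' where "z' = \<phi> (inv\<^bsub>G\<^esub> g) z"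
    have z'V: "z' \<in> V" unfolding z'_def using act_V[OF ig zV] .
    have "\<phi> g (\<phi> m z') = z" using cm[OF zV] zF' unfolding z'_def by simp
    then have "\<phi> (inv\<^bsub>G\<^esub> g) (\<phi> g (\<phi> m z')) = z'" unfolding z'_def by simp
    then have "\<phi> m z' = z'" using act_inv1[OF gG act_V[OF mG z'V]] by simp
    then have z'F: "z' \<in> ?F" using z'V by simp
    have z: "z = \<phi> g z'" unfolding z'_def using act_inv2[OF gG zV] by simp
    have "d z (\<phi> g p) = d z' p" unfolding z using act_d[OF gG z'V pV] .
    also have "\<dots> \<le> k" using diam[OF z'F] pV pm by simp
    finally have a: "d z (\<phi> g p) \<le> k" .
    have b: "d p z \<le> k" using diam[of p z] pV pm zF by simp
    have "d p (\<phi> g p) \<le> d p z + d z (\<phi> g p)" using d_tri[OF pV zV act_V[OF gG pV]] .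
    then show ?thesis using a b by simp
  qed
  define Q where "Q = {x \<in> V. \<forall>g\<in>carrier G. d x (\<phi> g p) \<le> 2 * k}"
  have Qcvx: "cvx Q"
    unfolding cvx_def
  proof (intro conjI ballI subsetI)
    fix x y v assume x: "x \<in> Q" and y: "y \<in> Q" and v: "v \<in> set (gp x y)"
    have xV: "x \<in> V" and yV: "y \<in> V" using x y unfolding Q_def by auto
    have vV: "v \<in> V" using gp_V[OF xV yV] v by blast
    have "d v (\<phi> g p) \<le> 2 * k" if "g \<in> carrier G" for g
      using ball_cvx[OF xV yV act_V[OF that pV] _ _ v] x y that unfolding Q_def by auto
    then show "v \<in> Q" using vV unfolding Q_def by auto
  qed (auto simp: Q_def)
  have pQ: "p \<in> Q" unfolding Q_def using pV close d_sym by auto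
  have Qinv: "\<phi> h x \<in> Q" if hG: "h \<in> carrier G" and xQ: "x \<in> Q" for h x
  proof -
    have xV: "x \<in> V" using xQ unfolding Q_def by auto
    have ih: "inv\<^bsub>G\<^esub> h \<in> carrier G" using group.inv_closed[OF grp hG] .
    have "d (\<phi> h x) (\<phi> g p) \<le> 2 * k" if gG: "g \<in> carrier G" for g
    proof -
      have gpV: "\<phi> g p \<in> V" using act_V[OF gG pV] .
      have g': "inv\<^bsub>G\<^esub> h \<otimes>\<^bsub>G\<^esub> g \<in> carrier G" using monoid.m_closed[OF group.is_monoid[OF grp] ih gG] .
      have "d (\<phi> h x) (\<phi> g p) = d (\<phi> h x) (\<phi> h (\<phi> (inv\<^bsub>G\<^esub> h) (\<phi> g p)))" using act_inv2[OF hG gpV] by simp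
      also have "\<dots> = d x (\<phi> (inv\<^bsub>G\<^esub> h) (\<phi> g p))" using act_d[OF hG xV act_V[OF ih gpV]] .
      also have "\<dots> = d x (\<phi> (inv\<^bsub>G\<^esub> h \<otimes>\<^bsub>G\<^esub> g) p)" using act_mult[OF ih gG pV] by simp
      also have "\<dots> \<le> 2 * k" using xQ g' unfolding Q_def by blast
      finally show ?thesis .
    qed
    then show ?thesis using act_V[OF hG xV] unfolding Q_def by blast
  qed
  have "Q = V" using mini_use[OF Qcvx _ Qinv] pQ by blast
  moreover have one: "\<one>\<^bsub>G\<^esub> \<in> carrier G" using monoid.one_closed[OF group.is_monoid[OF grp]] .
  ultimately have "\<forall>x\<in>V. d x (\<phi> \<one>\<^bsub>G\<^esub> p) \<le> 2 * k" unfolding Q_def by blast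
  then have "\<forall>x\<in>V. d x p \<le> 2 * k" using act_one[OF pV] by simp
  then show ?thesis using bounded_finite[OF pV] by blast
qed

lemma allV: assumes m: "m \<in> M" "\<forall>x\<in>V. \<phi> m x \<noteq> x"
  and S: "cvx S" "S \<noteq> {}" "\<forall>h\<in>M. \<forall>s\<in>S. \<phi> h s \<in> S" shows "S = V"
proof -
  have mG: "m \<in> carrier G" using M_G[OF m(1)] .
  have imM: "inv\<^bsub>G\<^esub> m \<in> M" using subgroup.m_inv_closed[OF subM m(1)] .
  obtain v where "v \<in> V" using V_ne by blast
  then obtain x0 where x0: "x0 \<in> V" "\<forall>x. x \<in> V \<longrightarrow> d x0 (\<phi> m x0) \<le> d x (\<phi> m x)"
    using ex_has_least_nat[of "\<lambda>x. x \<in> V" v "\<lambda>x. d x (\<phi> m x)"] by blast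
  define C where "C = {y \<in> V. \<forall>S. cvx S \<and> S \<noteq> {} \<and> (\<forall>h\<in>M. \<forall>s\<in>S. \<phi> h s \<in> S) \<longrightarrow> y \<in> S}"
  have x0C: "x0 \<in> C" unfolding C_def
  proof (intro CollectI conjI allI impI x0(1))
    fix S assume S: "cvx S \<and> S \<noteq> {} \<and> (\<forall>h\<in>M. \<forall>s\<in>S. \<phi> h s \<in> S)"
    show "x0 \<in> S"
    proof (rule mindisp[OF act_aut[OF mG]])
      show "\<forall>x\<in>V. \<phi> (inv\<^bsub>G\<^esub> m) (\<phi> m x) = x" using act_inv1[OF mG] by blast
      show "\<phi> m ` S \<subseteq> S" using S m(1) by blast
      show "\<phi> (inv\<^bsub>G\<^esub> m) ` S \<subseteq> S" using S imM by blast
    qed (use m(2) x0 S in auto)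
  qed
  have Ccvx: "cvx C"
    unfolding cvx_def
  proof (intro conjI ballI subsetI)
    fix x y v assume x: "x \<in> C" and y: "y \<in> C" and v: "v \<in> set (gp x y)"
    have xV: "x \<in> V" and yV: "y \<in> V" using x y unfolding C_def by auto
    have vV: "v \<in> V" using gp_V[OF xV yV] v by blast
    have "v \<in> S" if "cvx S \<and> S \<noteq> {} \<and> (\<forall>h\<in>M. \<forall>s\<in>S. \<phi> h s \<in> S)" for S
    proof -
      have "x \<in> S" "y \<in> S" using x y that unfolding C_def by auto
      then show ?thesis using cvx_gp[of S x y] that v by blast
    qed
    then show "v \<in> C" using vV unfolding C_def by auto
  qed (auto simp: C_def)
  have Cinv: "\<phi> g y \<in> C" if gG: "g \<in> carrier G" and yC: "y \<in> C" for g y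
  proof -
    have yV: "y \<in> V" using yC unfolding C_def by auto
    have ig: "inv\<^bsub>G\<^esub> g \<in> carrier G" using group.inv_closed[OF grp gG] .
    have "\<phi> g y \<in> S" if S: "cvx S \<and> S \<noteq> {} \<and> (\<forall>h\<in>M. \<forall>s\<in>S. \<phi> h s \<in> S)" for S
    proof -
      let ?S' = "\<phi> (inv\<^bsub>G\<^esub> g) ` S"
      have SV: "S \<subseteq> V" using S cvx_V by blast
      have c': "cvx ?S'" using aut_cvx[OF act_aut[OF ig]] S by blast
      have n': "?S' \<noteq> {}" using S by blast
      have i': "\<forall>h\<in>M. \<forall>s\<in>?S'. \<phi> h s \<in> ?S'"
      proof (intro ballI)
        fix h s' assume hM: "h \<in> M" and s': "s' \<in> ?S'"
        then obtain s where sS: "s \<in> S" and ss: "s' = \<phi> (inv\<^bsub>G\<^esub> g) s" by blast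
        have sV: "s \<in> V" using sS SV by blast
        have hG: "h \<in> carrier G" using M_G[OF hM] .
        have h'M: "g \<otimes>\<^bsub>G\<^esub> h \<otimes>\<^bsub>G\<^esub> inv\<^bsub>G\<^esub> g \<in> M" using normal.inv_op_closed2[OF nM gG hM] .
        have "\<phi> (g \<otimes>\<^bsub>G\<^esub> h \<otimes>\<^bsub>G\<^esub> inv\<^bsub>G\<^esub> g) s \<in> S" using S h'M sS by blast
        moreover have "\<phi> (inv\<^bsub>G\<^esub> g) (\<phi> (g \<otimes>\<^bsub>G\<^esub> h \<otimes>\<^bsub>G\<^esub> inv\<^bsub>G\<^esub> g) s) = \<phi> h s'"
          using conj_act[OF gG hG sV] act_inv1[OF gG act_V[OF hG act_V[OF ig sV]]] ss by simp
        ultimately show "\<phi> h s' \<in> ?S'" by (metis image_eqI)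
      qed
      have "y \<in> ?S'" using yC c' n' i' unfolding C_def by blast
      then obtain s where "s \<in> S" "y = \<phi> (inv\<^bsub>G\<^esub> g) s" by blast
      then show ?thesis using act_inv2[OF gG] SV by auto
    qed
    then show ?thesis using act_V[OF gG yV] unfolding C_def by blast
  qed
  have CV: "C = V" using mini_use[OF Ccvx _ Cinv] x0C by blast
  show ?thesis
  proof
    show "S \<subseteq> V" using cvx_V[OF S(1)] .
    show "V \<subseteq> S" using CV S unfolding C_def by blast
  qed
qed

end

lemma wk_mono: "wk R xs \<Longrightarrow> (\<And>a b. R a b \<Longrightarrow> R' a b) \<Longrightarrow> wk R' xs"
  by (induction R xs rule: wk.induct) auto

lemma wk_concat: assumes "wk R xs" "wk R ys" "last xs = hd ys"
  shows "wk R (xs @ tl ys)" "hd (xs @ tl ys) = hd xs" "last (xs @ tl ys) = last ys" "set (xs @ tl ys) \<subseteq> set xs \<union> set ys"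
proof -
  have xne: "xs \<noteq> []" and yne: "ys \<noteq> []" using assms by auto
  have xs: "xs = butlast xs @ [last xs]" using xne by simp
  have ys: "ys = hd ys # tl ys" using yne by simp
  have "wk R (butlast xs @ [last xs])" using assms(1) xs by simp
  moreover have "wk R (last xs # tl ys)" using assms(2,3) ys by (metis)
  ultimately have "wk R (butlast xs @ last xs # tl ys)" by (rule wk_append)
  then show "wk R (xs @ tl ys)" using xs by (metis append.assoc append_Cons append_Nil)
  show "hd (xs @ tl ys) = hd xs" using xne by simp
  show "last (xs @ tl ys) = last ys"
  proof (cases "tl ys = []")
    case True
    then have "ys = [hd ys]" using ys by simp
    then show ?thesis using assms(3) True by (metis append_Nil2 last.simps)
  next
    case False
    then show ?thesis using ys by (metis last_ConsR last_appendR)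
  qed
  show "set (xs @ tl ys) \<subseteq> set xs \<union> set ys" using ys by (auto simp: list.set_sel(2)[OF yne])
qed

context ctx begin

lemma shift: assumes "h \<in> H" shows "{F (h' \<otimes>\<^bsub>G\<^esub> h) | h'. h' \<in> H} = {F h' | h'. h' \<in> H}"
proof (intro equalityI subsetI)
  fix z assume "z \<in> {F (h' \<otimes>\<^bsub>G\<^esub> h) | h'. h' \<in> H}"
  then obtain h' where "h' \<in> H" "z = F (h' \<otimes>\<^bsub>G\<^esub> h)" by blast
  moreover have "h' \<otimes>\<^bsub>G\<^esub> h \<in> H" using subgroup.m_closed[OF subH \<open>h' \<in> H\<close> assms] .
  ultimately show "z \<in> {F h' | h'. h' \<in> H}" by blast
next
  fix z assume "z \<in> {F h' | h'. h' \<in> H}"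
  then obtain h' where h': "h' \<in> H" "z = F h'" by blast
  have ih: "inv\<^bsub>G\<^esub> h \<in> H" using subgroup.m_inv_closed[OF subH assms] .
  have e: "(h' \<otimes>\<^bsub>G\<^esub> inv\<^bsub>G\<^esub> h) \<otimes>\<^bsub>G\<^esub> h = h'"
    using group.inv_solve_right'[OF grp] H_G[OF h'(1)] H_G[OF assms] H_G[OF ih]
    by (metis group.inv_solve_right grp monoid.m_closed group.is_monoid)
  have "h' \<otimes>\<^bsub>G\<^esub> inv\<^bsub>G\<^esub> h \<in> H" using subgroup.m_closed[OF subH h'(1) ih] .
  then show "z \<in> {F (h' \<otimes>\<^bsub>G\<^esub> h) | h'. h' \<in> H}" using e h' by (metis (mono_tags, lifting) mem_Collect_eq)
qed

lemma cocompact_finite: assumes "finite V" shows "cocompact_on H V adj \<phi>"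
  unfolding cocompact_on_def
proof
  have "{{\<phi> h x | h. h \<in> H} | x. x \<in> V} = (\<lambda>x. {\<phi> h x | h. h \<in> H}) ` V" by blast
  then show "finite {{\<phi> h x | h. h \<in> H} | x. x \<in> V}" using assms by simp
  have "{{{\<phi> h x, \<phi> h y} | h. h \<in> H} | x y. adj x y} \<subseteq> (\<lambda>(x, y). {{\<phi> h x, \<phi> h y} | h. h \<in> H}) ` (V \<times> V)"
    using adj_V by fastforce
  then show "finite {{{\<phi> h x, \<phi> h y} | h. h \<in> H} | x y. adj x y}"
    using assms by (meson finite_SigmaI finite_imageI finite_subset)
qed

lemma main: "cocompact_on H V adj \<phi>"
proof (cases "finite V")
  case True then show ?thesis by (rule cocompact_finite)
next
  case infV: False
  obtain m where m: "m \<in> M" "\<forall>x\<in>V. \<phi> m x \<noteq> x" using elliptic infV by blast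
  obtain Sg where Sg: "finite Sg" "Sg \<subseteq> H" "generate G Sg = H"
    using fg unfolding finitely_generated_subgroup_def by blast
  obtain v where vV: "v \<in> V" using V_ne by blast
  have oneH: "\<one>\<^bsub>G\<^esub> \<in> H" using subgroup.one_closed[OF subH] .
  have SgG: "s \<in> carrier G" if "s \<in> Sg" for s using H_G Sg(2) that by blast
  define T0 where "T0 = insert v (\<Union>s\<in>Sg. set (gp v (\<phi> s v)))"
  have T0V: "T0 \<subseteq> V" unfolding T0_def using vV gp_V[OF vV act_V[OF SgG vV]] by blast
  have T0fin: "finite T0" unfolding T0_def using Sg(1) by simp
  define Hedge where "Hedge x y \<longleftrightarrow> (\<exists>h\<in>H. \<exists>a\<in>T0. \<exists>b\<in>T0. adj a b \<and> x = \<phi> h a \<and> y = \<phi> h b)" for x y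
  define R where "R x y \<longleftrightarrow> adj x y \<and> Hedge x y" for x y
  define Te where "Te = {\<phi> h t | h t. h \<in> H \<and> t \<in> T0}"
  have TeV: "Te \<subseteq> V" unfolding Te_def using T0V act_V H_G by blast
  have T0Te: "T0 \<subseteq> Te" unfolding Te_def using act_one T0V oneH by force
  have Te_inv: "\<phi> h x \<in> Te" if hH: "h \<in> H" and xT: "x \<in> Te" for h x
  proof -
    obtain h' t where ht: "h' \<in> H" "t \<in> T0" "x = \<phi> h' t" using xT unfolding Te_def by blast
    have "\<phi> h x = \<phi> (h \<otimes>\<^bsub>G\<^esub> h') t" using act_mult[OF H_G[OF hH] H_G[OF ht(1)]] T0V ht by auto
    moreover have "h \<otimes>\<^bsub>G\<^esub> h' \<in> H" using subgroup.m_closed[OF subH hH ht(1)] .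
    ultimately show ?thesis using ht(2) unfolding Te_def by blast
  qed
  have R_sym: "R x y \<Longrightarrow> R y x" for x y unfolding R_def Hedge_def using adj_sym by blast
  have R_tr: "R (\<phi> h x) (\<phi> h y)" if hH: "h \<in> H" and xV: "x \<in> V" and yV: "y \<in> V" and Rxy: "R x y" for h x y
  proof -
    have a: "adj (\<phi> h x) (\<phi> h y)" using act_aut[OF H_G[OF hH]] xV yV Rxy unfolding R_def aut_def by blast
    obtain h' a b where hab: "h' \<in> H" "a \<in> T0" "b \<in> T0" "adj a b" "x = \<phi> h' a" "y = \<phi> h' b"
      using Rxy unfolding R_def Hedge_def by blast
    have "\<phi> h x = \<phi> (h \<otimes>\<^bsub>G\<^esub> h') a" "\<phi> h y = \<phi> (h \<otimes>\<^bsub>G\<^esub> h') b"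
      using act_mult[OF H_G[OF hH] H_G[OF hab(1)]] T0V hab by auto
    moreover have "h \<otimes>\<^bsub>G\<^esub> h' \<in> H" using subgroup.m_closed[OF subH hH hab(1)] .
    ultimately have "Hedge (\<phi> h x) (\<phi> h y)" unfolding Hedge_def using hab by blast
    then show ?thesis using a unfolding R_def by blast
  qed
  have R_T0: "R a b" if "a \<in> T0" "b \<in> T0" "adj a b" for a b
    unfolding R_def Hedge_def using that oneH act_one T0V by (metis subsetD)
  have walkT: "wk R ws" if "wk adj ws" "set ws \<subseteq> T0" for ws
  proof -
    have "wk (\<lambda>a b. adj a b \<and> a \<in> T0 \<and> b \<in> T0) ws"
      using that by (induction adj ws rule: wk.induct) auto
    then show ?thesis by (rule wk_mono) (use R_T0 in blast)
  qed
  have translate: "wk R (map (\<phi> h) ws) \<and> set (map (\<phi> h) ws) \<subseteq> Te" if "h \<in> H" "wk R ws" "set ws \<subseteq> Te" for h ws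
  proof
    show "wk R (map (\<phi> h) ws)"
      by (rule wk_map[OF that(2)]) (use R_tr that TeV in blast)
    show "set (map (\<phi> h) ws) \<subseteq> Te" using Te_inv that by auto
  qed
  define P where "P h \<longleftrightarrow> (\<exists>ws. wk R ws \<and> hd ws = v \<and> last ws = \<phi> h v \<and> set ws \<subseteq> Te)" for h
  have gen_walk: "P s" if "s \<in> Sg" for s
  proof -
    have sV: "\<phi> s v \<in> V" using act_V[OF SgG[OF that] vV] .
    have st: "set (gp v (\<phi> s v)) \<subseteq> T0" unfolding T0_def using that by blast
    show ?thesis unfolding P_def
      using walkT[OF gp(1)[OF vV sV] st] gp(3,4)[OF vV sV] st T0Te by blast
  qed
  have PH: "P h" if "h \<in> H" for h
  proof -
    have "h \<in> generate G Sg" using that Sg(3) by simp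
    then show ?thesis
    proof (induction h rule: generate.induct)
      case one
      then show ?case unfolding P_def using act_one[OF vV] vV T0Te unfolding T0_def
        by (intro exI[of _ "[v]"]) auto
    next
      case (incl s) then show ?case by (rule gen_walk)
    next
      case (inv s)
      have sG: "s \<in> carrier G" using SgG[OF inv] .
      have isH: "inv\<^bsub>G\<^esub> s \<in> H" using subgroup.m_inv_closed[OF subH] Sg(2) inv by blast
      obtain ws where ws: "wk R ws" "hd ws = v" "last ws = \<phi> s v" "set ws \<subseteq> Te"
        using gen_walk[OF inv] unfolding P_def by blast
      have ne: "ws \<noteq> []" using ws(1) by auto
      have rws: "wk R (rev ws)" using wk_rev[OF _ ws(1)] R_sym by blast
      have t: "wk R (map (\<phi> (inv\<^bsub>G\<^esub> s)) (rev ws)) \<and> set (map (\<phi> (inv\<^bsub>G\<^esub> s)) (rev ws)) \<subseteq> Te"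
        using translate[OF isH rws] ws(4) by simp
      have "hd (map (\<phi> (inv\<^bsub>G\<^esub> s)) (rev ws)) = v"
        using ne ws(3) act_inv1[OF sG vV] by (simp add: hd_map hd_rev)
      moreover have "last (map (\<phi> (inv\<^bsub>G\<^esub> s)) (rev ws)) = \<phi> (inv\<^bsub>G\<^esub> s) v"
        using ne ws(2) by (simp add: last_map last_rev)
      ultimately show ?case unfolding P_def using t by blast
    next
      case (eng h1 h2)
      have h1H: "h1 \<in> H" and h2H: "h2 \<in> H" using eng.hyps Sg(3) by auto
      obtain ws1 where w1: "wk R ws1" "hd ws1 = v" "last ws1 = \<phi> h1 v" "set ws1 \<subseteq> Te"
        using eng.IH(1) unfolding P_def by blast
      obtain ws2 where w2: "wk R ws2" "hd ws2 = v" "last ws2 = \<phi> h2 v" "set ws2 \<subseteq> Te"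
        using eng.IH(2) unfolding P_def by blast
      have ne2: "ws2 \<noteq> []" using w2(1) by auto
      have t: "wk R (map (\<phi> h1) ws2) \<and> set (map (\<phi> h1) ws2) \<subseteq> Te" using translate[OF h1H w2(1,4)] .
      have j: "last ws1 = hd (map (\<phi> h1) ws2)" using w1(3) w2(2) ne2 by (simp add: hd_map)
      have l: "last (map (\<phi> h1) ws2) = \<phi> (h1 \<otimes>\<^bsub>G\<^esub> h2) v"
        using ne2 w2(3) act_mult[OF H_G[OF h1H] H_G[OF h2H] vV] by (simp add: last_map)
      note c = wk_concat[OF w1(1) conjunct1[OF t] j]
      show ?case unfolding P_def
        by (intro exI[of _ "ws1 @ tl (map (\<phi> h1) ws2)"]) (use c w1 t l in auto)
    qed
  qed
  have toT0: "\<exists>ws. wk R ws \<and> hd ws = v \<and> last ws = a \<and> set ws \<subseteq> T0" if aT: "a \<in> T0" for a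
  proof (cases "a = v")
    case True then show ?thesis using aT by (intro exI[of _ "[v]"]) auto
  next
    case False
    then obtain s where s: "s \<in> Sg" "a \<in> set (gp v (\<phi> s v))" using aT unfolding T0_def by blast
    have sV: "\<phi> s v \<in> V" using act_V[OF SgG[OF s(1)] vV] .
    let ?g = "gp v (\<phi> s v)"
    obtain i where i: "i < length ?g" "?g ! i = a" using s(2) by (metis in_set_conv_nth)
    have tk: "take (Suc i) ?g = take i ?g @ [a]" using i by (simp add: take_Suc_conv_app_nth)
    have st: "set ?g \<subseteq> T0" unfolding T0_def using s(1) by blast
    have w: "wk adj (take (Suc i) ?g)"
      using gp(1)[OF vV sV] wk_prefix[of adj "take (Suc i) ?g" "drop (Suc i) ?g"] gp_ne[OF vV sV] by simp
    have "set (take (Suc i) ?g) \<subseteq> T0" using st set_take_subset by (metis subset_trans)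
    moreover have "hd (take (Suc i) ?g) = v" using gp(3)[OF vV sV] gp_ne[OF vV sV] by (cases ?g) auto
    moreover have "last (take (Suc i) ?g) = a" using tk by simp
    ultimately show ?thesis using walkT[OF w] by blast
  qed
  have fromv: "\<exists>ws. wk R ws \<and> hd ws = v \<and> last ws = x \<and> set ws \<subseteq> Te" if xT: "x \<in> Te" for x
  proof -
    obtain h a where ha: "h \<in> H" "a \<in> T0" "x = \<phi> h a" using xT unfolding Te_def by blast
    obtain ws1 where w1: "wk R ws1" "hd ws1 = v" "last ws1 = \<phi> h v" "set ws1 \<subseteq> Te"
      using PH[OF ha(1)] unfolding P_def by blast
    obtain ws2 where w2: "wk R ws2" "hd ws2 = v" "last ws2 = a" "set ws2 \<subseteq> T0" using toT0[OF ha(2)] by blast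
    have ne2: "ws2 \<noteq> []" using w2(1) by auto
    have t: "wk R (map (\<phi> h) ws2) \<and> set (map (\<phi> h) ws2) \<subseteq> Te" using translate[OF ha(1) w2(1)] w2(4) T0Te by blast
    have j: "last ws1 = hd (map (\<phi> h) ws2)" using w1(3) w2(2) ne2 by (simp add: hd_map)
    have l: "last (map (\<phi> h) ws2) = x" using ne2 w2(3) ha(3) by (simp add: last_map)
    note c = wk_concat[OF w1(1) conjunct1[OF t] j]
    show ?thesis
      by (intro exI[of _ "ws1 @ tl (map (\<phi> h) ws2)"]) (use c w1 t l in auto)
  qed
  have conn_Te: "\<exists>ws. wk R ws \<and> hd ws = x \<and> last ws = y \<and> set ws \<subseteq> Te" if xT: "x \<in> Te" and yT: "y \<in> Te" for x y
  proof -
    obtain ws1 where w1: "wk R ws1" "hd ws1 = v" "last ws1 = x" "set ws1 \<subseteq> Te" using fromv[OF xT] by blast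
    obtain ws2 where w2: "wk R ws2" "hd ws2 = v" "last ws2 = y" "set ws2 \<subseteq> Te" using fromv[OF yT] by blast
    have ne1: "ws1 \<noteq> []" using w1(1) by auto
    have r: "wk R (rev ws1)" using wk_rev[OF _ w1(1)] R_sym by blast
    have j: "last (rev ws1) = hd ws2" using ne1 w1(2) w2(2) by (simp add: last_rev)
    note c = wk_concat[OF r w2(1) j]
    show ?thesis
      by (intro exI[of _ "rev ws1 @ tl ws2"]) (use c w1 w2 ne1 in \<open>auto simp: hd_rev\<close>)
  qed
  have Te_cvx: "cvx Te"
    unfolding cvx_def
  proof (intro conjI ballI TeV)
    fix x y assume "x \<in> Te" "y \<in> Te"
    then obtain ws where ws: "wk R ws" "hd ws = x" "last ws = y" "set ws \<subseteq> Te" using conn_Te by blast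
    have "wk adj ws" using ws(1) by (rule wk_mono) (simp add: R_def)
    then obtain ys where ys: "wk adj ys \<and> rd ys \<and> hd ys = hd ws \<and> last ys = last ws \<and> set ys \<subseteq> set ws"
      using reduce[of adj ws] by blast
    then have "gp x y = ys" using gp_eq ws by blast
    then show "set (gp x y) \<subseteq> Te" using ys ws by blast
  qed
  have Te_edge: "Hedge x y" if axy: "adj x y" for x y
  proof -
    have TeV': "Te = V"
    proof (rule allV[OF m Te_cvx])
      show "Te \<noteq> {}" using T0Te unfolding T0_def by blast
      show "\<forall>h\<in>M. \<forall>s\<in>Te. \<phi> h s \<in> Te" using Te_inv MH by blast
    qed
    then have "x \<in> Te" "y \<in> Te" using adj_V axy by auto
    then obtain ws where ws: "wk R ws" "hd ws = x" "last ws = y" "set ws \<subseteq> Te" using conn_Te by blast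
    then obtain ys where ys: "wk R ys \<and> rd ys \<and> hd ys = hd ws \<and> last ys = last ws"
      using reduce[of R ws] by blast
    have "wk adj ys" using conjunct1[OF ys] by (rule wk_mono) (simp add: R_def)
    then have "gp x y = ys" using gp_eq ys ws by blast
    then have yx: "ys = [x, y]" using gp_adj[OF axy] by simp
    have "wk R ys" using ys by blast
    then have "wk R [x, y]" by (simp only: yx)
    then show ?thesis unfolding R_def by simp
  qed
  have TeV': "Te = V"
  proof (rule allV[OF m Te_cvx])
    show "Te \<noteq> {}" using T0Te unfolding T0_def by blast
    show "\<forall>h\<in>M. \<forall>s\<in>Te. \<phi> h s \<in> Te" using Te_inv MH by blast
  qed
  show ?thesis
    unfolding cocompact_on_def
  proof
    have "{{\<phi> h x | h. h \<in> H} | x. x \<in> V} \<subseteq> (\<lambda>t. {\<phi> h t | h. h \<in> H}) ` T0"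
    proof
      fix X assume "X \<in> {{\<phi> h x | h. h \<in> H} | x. x \<in> V}"
      then obtain x where x: "x \<in> V" "X = {\<phi> h x | h. h \<in> H}" by blast
      then obtain h t where ht: "h \<in> H" "t \<in> T0" "x = \<phi> h t" using TeV' unfolding Te_def by blast
      have tV: "t \<in> V" using ht(2) T0V by blast
      have "X = (\<lambda>h'. \<phi> h' x) ` H" using x(2) by (simp add: Setcompr_eq_image)
      also have "\<dots> = (\<lambda>h'. \<phi> (h' \<otimes>\<^bsub>G\<^esub> h) t) ` H"
        by (rule image_cong[OF refl]) (use ht(3) act_mult[OF H_G H_G[OF ht(1)] tV] in simp)
      also have "\<dots> = (\<lambda>h'. \<phi> h' t) ` H" using shift[OF ht(1), of "\<lambda>g. \<phi> g t"] by (simp add: Setcompr_eq_image)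
      finally have "X = {\<phi> h t | h. h \<in> H}" by (simp add: Setcompr_eq_image)
      then show "X \<in> (\<lambda>t. {\<phi> h t | h. h \<in> H}) ` T0" using ht(2) by blast
    qed
    then show "finite {{\<phi> h x | h. h \<in> H} | x. x \<in> V}" by (rule finite_subset[OF _ finite_imageI[OF T0fin]])
    have "{{{\<phi> h x, \<phi> h y} | h. h \<in> H} | x y. adj x y} \<subseteq> (\<lambda>(a, b). {{\<phi> h a, \<phi> h b} | h. h \<in> H}) ` (T0 \<times> T0)"
    proof
      fix X assume "X \<in> {{{\<phi> h x, \<phi> h y} | h. h \<in> H} | x y. adj x y}"
      then obtain x y where xy: "adj x y" "X = {{\<phi> h x, \<phi> h y} | h. h \<in> H}" by blast
      then obtain h a b where hab: "h \<in> H" "a \<in> T0" "b \<in> T0" "x = \<phi> h a" "y = \<phi> h b"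
        using Te_edge[OF xy(1)] unfolding Hedge_def by blast
      have aV: "a \<in> V" and bV: "b \<in> V" using hab T0V by auto
      have "X = (\<lambda>h'. {\<phi> h' x, \<phi> h' y}) ` H" using xy(2) by (simp add: Setcompr_eq_image)
      also have "\<dots> = (\<lambda>h'. {\<phi> (h' \<otimes>\<^bsub>G\<^esub> h) a, \<phi> (h' \<otimes>\<^bsub>G\<^esub> h) b}) ` H"
        by (rule image_cong[OF refl]) (use hab(4,5) act_mult[OF H_G H_G[OF hab(1)] aV] act_mult[OF H_G H_G[OF hab(1)] bV] in simp)
      also have "\<dots> = (\<lambda>h'. {\<phi> h' a, \<phi> h' b}) ` H" using shift[OF hab(1), of "\<lambda>g. {\<phi> g a, \<phi> g b}"] by (simp add: Setcompr_eq_image)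
      finally have "X = {{\<phi> h a, \<phi> h b} | h. h \<in> H}" by (simp add: Setcompr_eq_image)
      then show "X \<in> (\<lambda>(a, b). {{\<phi> h a, \<phi> h b} | h. h \<in> H}) ` (T0 \<times> T0)" using hab(2,3) by blast
    qed
    then show "finite {{{\<phi> h x, \<phi> h y} | h. h \<in> H} | x y. adj x y}"
      by (rule finite_subset[OF _ finite_imageI[OF finite_cartesian_product[OF T0fin T0fin]]])
  qed
qed

end

theorem lemma5p1:
  fixes G :: "('g, 'b) monoid_scheme" and V :: "'v set" and adj :: "'v \<Rightarrow> 'v \<Rightarrow> bool"
    and \<phi> :: "'g \<Rightarrow> 'v \<Rightarrow> 'v" and k :: nat and H M :: "'g set"
  assumes "group G"
    and "tree_action G V adj \<phi>"
    and "without_inversions G adj \<phi>"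
    and "acylindrical k G adj \<phi>"
    and "cocompact_on (carrier G) V adj \<phi>"
    and "minimal_action G V adj \<phi>"
    and "finitely_generated_subgroup G H"
    and "M \<subseteq> H" and "normal M G" and "M \<noteq> {\<one>\<^bsub>G\<^esub>}"
  shows "cocompact_on H V adj \<phi>"
proof -
  have t: "tree V adj" using assms(2) unfolding tree_action_def by (simp add: tree.intro)
  have "ctx V adj G \<phi> k H M"
    by (rule ctx.intro[OF t]) (rule ctx_axioms.intro; use assms in simp)
  then show ?thesis by (rule ctx.main)
qed

end
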